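(* Let $\mathcal A=\mathcal R$ be a finite set of $n_a$ units with random treatment vector $\mathbf T$, edge potential outcomes $E_{ar}$, realized edges $e_{ar}$, weights $w_{ar},u_{ar},c_{ar}$ and outcome model $y_a=\alpha_a+\beta_ax_a+\gamma_aT_a$ as in the context. Suppose $G$ is a known anchor subgraph and: (a) edges are $r$-driven; (b) the $T_r$ are independent Bernoulli$(p)$ with $p\in(0,1)$; (c) $\{(a,r)\mid u_{ar}\neq0\}\subset G$; (d) $c_{ar}=\mathbb I((a,r)\in G)$; (e) $w_{ar}\neq0$ for all $(a,r)\in G$; (f) $|\{r\mid u_{ar}\neq0\}|>0$ for all $a$. If moreover $w_{aa}=u_{aa}=0$ for all $a$, then $$\hat\mu^{u,c}_{uni}=\frac1{n_a}\sum_a\left[\hat\beta^u_a\cdot\widehat{\mathcal W_a(\mathbf 1)}^c+\hat\gamma_a\right]$$ is an unbiased estimator of the TTE $\frac1{n_a}\sum_a[\mathcal W_a(\mathbf 1)\beta_a+\gamma_a]$.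
   Context: Setting (endogenous unipartite interference graph): the analysis units and randomization units coincide, $\mathcal A=\mathcal R$, $n_a$ units. A random treatment vector $\mathbf T=(T_r)_{r\in\mathcal R}$ is assigned; all randomness comes from $\mathbf T$. For each ordered pair $(a,r)$ there is an unknown edge potential outcome function $E_{ar}:\{0,1\}^{n_a}\to\{0,1\}$ (possibly $E_{ar}\neq E_{ra}$) with observed realization $e_{ar}=E_{ar}(\mathbf T)$. Edges are $r$-driven if each $E_{ar}(\mathbf T)$ depends on $\mathbf T$ only through $T_r$. An anchor subgraph is a set $G\subset\mathcal A\times\mathcal R$ with $E_{ar}(\mathbf T)=1$ for all $\mathbf T$ and all $(a,r)\in G$. Outcome model: with known real weights $w_{ar}$, $y_a=Y_a(\mathbf T)=\alpha_a+\beta_ax_a+\gamma_aT_a$, where $x_a=\sum_rT_rE_{ar}(\mathbf T)w_{ar}$ and $\alpha_a,\beta_a,\gamma_a$ are unknown constants. TTE: $\frac1{n_a}\sum_a[Y_a(\mathbf 1)-Y_a(\mathbf 0)]=\frac1{n_a}\sum_a[\mathcal W_a(\mathbf 1)\beta_a+\gamma_a]$ with $\mathcal W_a(\mathbf 1)=\sum_rw_{ar}E_{ar}(\mathbf 1)$. Estimators: for fixed real weights $u_{ar},c_{ar}$, $z^u_a=\sum_rT_ru_{ar}$, $\hat\beta^u_a=y_a(z^u_a-\mathbb Ez^u_a)/\mathrm{Cov}(x_a,z^u_a)$, $\widehat{\mathcal W_a(\mathbf 1)}^c=\sum_r\left[\frac{T_rw_{ar}(e_{ar}-c_{ar})}{p}+w_{ar}c_{ar}\right]$,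 and $\hat\gamma_a=T_ay_a/p-(1-T_a)y_a/(1-p)$. *)

theory Defs
  imports "HOL-Probability.Probability"
begin

text \<open>Units form a finite type 'u (analysis units = randomization units).\<close>

definition treat_pmf :: "real \<Rightarrow> ('u::finite \<Rightarrow> bool) pmf" where
  "treat_pmf p = Pi_pmf UNIV False (\<lambda>_. bernoulli_pmf p)"

definition Ex_T :: "real \<Rightarrow> (('u::finite \<Rightarrow> bool) \<Rightarrow> real) \<Rightarrow> real" where
  "Ex_T p f = measure_pmf.expectation (treat_pmf p) f"

definition Cov_T :: "real \<Rightarrow> (('u::finite \<Rightarrow> bool) \<Rightarrow> real) \<Rightarrow> (('u \<Rightarrow> bool) \<Rightarrow> real) \<Rightarrow> real" where
  "Cov_T p X Z = Ex_T p (\<lambda>t. (X t - Ex_T p X) * (Z t - Ex_T p Z))"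

definition r_driven :: "('u \<Rightarrow> 'u \<Rightarrow> ('u \<Rightarrow> bool) \<Rightarrow> bool) \<Rightarrow> bool" where
  "r_driven E \<longleftrightarrow> (\<forall>a r t t'. t r = t' r \<longrightarrow> E a r t = E a r t')"

definition anchor_subgraph :: "('u \<Rightarrow> 'u \<Rightarrow> ('u \<Rightarrow> bool) \<Rightarrow> bool) \<Rightarrow> ('u \<times> 'u) set \<Rightarrow> bool" where
  "anchor_subgraph E G \<longleftrightarrow> (\<forall>(a, r) \<in> G. \<forall>t. E a r t)"

definition exposure :: "('u::finite \<Rightarrow> 'u \<Rightarrow> real) \<Rightarrow> ('u \<Rightarrow> 'u \<Rightarrow> ('u \<Rightarrow> bool) \<Rightarrow> bool)
    \<Rightarrow> 'u \<Rightarrow> ('u \<Rightarrow> bool) \<Rightarrow> real" where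
  "exposure w E a t = (\<Sum>r\<in>UNIV. of_bool (t r) * of_bool (E a r t) * w a r)"

definition outcome :: "('u \<Rightarrow> real) \<Rightarrow> ('u \<Rightarrow> real) \<Rightarrow> ('u \<Rightarrow> real) \<Rightarrow> ('u::finite \<Rightarrow> 'u \<Rightarrow> real)
    \<Rightarrow> ('u \<Rightarrow> 'u \<Rightarrow> ('u \<Rightarrow> bool) \<Rightarrow> bool) \<Rightarrow> 'u \<Rightarrow> ('u \<Rightarrow> bool) \<Rightarrow> real" where
  "outcome \<alpha> \<beta> \<gamma> w E a t = \<alpha> a + \<beta> a * exposure w E a t + \<gamma> a * of_bool (t a)"

definition zu :: "('u::finite \<Rightarrow> 'u \<Rightarrow> real) \<Rightarrow> 'u \<Rightarrow> ('u \<Rightarrow> bool) \<Rightarrow> real" where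
  "zu u a t = (\<Sum>r\<in>UNIV. of_bool (t r) * u a r)"

definition beta_hat :: "real \<Rightarrow> ('u \<Rightarrow> real) \<Rightarrow> ('u \<Rightarrow> real) \<Rightarrow> ('u \<Rightarrow> real) \<Rightarrow> ('u::finite \<Rightarrow> 'u \<Rightarrow> real)
    \<Rightarrow> ('u \<Rightarrow> 'u \<Rightarrow> ('u \<Rightarrow> bool) \<Rightarrow> bool) \<Rightarrow> ('u \<Rightarrow> 'u \<Rightarrow> real) \<Rightarrow> 'u \<Rightarrow> ('u \<Rightarrow> bool) \<Rightarrow> real" where
  "beta_hat p \<alpha> \<beta> \<gamma> w E u a t =
     outcome \<alpha> \<beta> \<gamma> w E a t * (zu u a t - Ex_T p (zu u a))
       / Cov_T p (exposure w E a) (zu u a)"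

definition W_hat :: "real \<Rightarrow> ('u::finite \<Rightarrow> 'u \<Rightarrow> real) \<Rightarrow> ('u \<Rightarrow> 'u \<Rightarrow> ('u \<Rightarrow> bool) \<Rightarrow> bool)
    \<Rightarrow> ('u \<Rightarrow> 'u \<Rightarrow> real) \<Rightarrow> 'u \<Rightarrow> ('u \<Rightarrow> bool) \<Rightarrow> real" where
  "W_hat p w E c a t =
     (\<Sum>r\<in>UNIV. of_bool (t r) * w a r * (of_bool (E a r t) - c a r) / p + w a r * c a r)"

definition gamma_hat :: "real \<Rightarrow> ('u \<Rightarrow> real) \<Rightarrow> ('u \<Rightarrow> real) \<Rightarrow> ('u \<Rightarrow> real) \<Rightarrow> ('u::finite \<Rightarrow> 'u \<Rightarrow> real)
    \<Rightarrow> ('u \<Rightarrow> 'u \<Rightarrow> ('u \<Rightarrow> bool) \<Rightarrow> bool) \<Rightarrow> 'u \<Rightarrow> ('u \<Rightarrow> bool) \<Rightarrow> real" where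
  "gamma_hat p \<alpha> \<beta> \<gamma> w E a t =
     of_bool (t a) * outcome \<alpha> \<beta> \<gamma> w E a t / p
     - (1 - of_bool (t a)) * outcome \<alpha> \<beta> \<gamma> w E a t / (1 - p)"

definition mu_hat_uni :: "real \<Rightarrow> ('u \<Rightarrow> real) \<Rightarrow> ('u \<Rightarrow> real) \<Rightarrow> ('u \<Rightarrow> real) \<Rightarrow> ('u::finite \<Rightarrow> 'u \<Rightarrow> real)
    \<Rightarrow> ('u \<Rightarrow> 'u \<Rightarrow> ('u \<Rightarrow> bool) \<Rightarrow> bool) \<Rightarrow> ('u \<Rightarrow> 'u \<Rightarrow> real) \<Rightarrow> ('u \<Rightarrow> 'u \<Rightarrow> real)
    \<Rightarrow> ('u \<Rightarrow> bool) \<Rightarrow> real" where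
  "mu_hat_uni p \<alpha> \<beta> \<gamma> w E u c t =
     (1 / real CARD('u)) * (\<Sum>a\<in>UNIV. beta_hat p \<alpha> \<beta> \<gamma> w E u a t * W_hat p w E c a t
                                      + gamma_hat p \<alpha> \<beta> \<gamma> w E a t)"

text \<open>Total treatment effect (1/n_a) sum_a [W_a(1) beta_a + gamma_a], W_a(1) = sum_r w_{ar} E_{ar}(1).\<close>
definition TTE :: "('u \<Rightarrow> real) \<Rightarrow> ('u \<Rightarrow> real) \<Rightarrow> ('u::finite \<Rightarrow> 'u \<Rightarrow> real)
    \<Rightarrow> ('u \<Rightarrow> 'u \<Rightarrow> ('u \<Rightarrow> bool) \<Rightarrow> bool) \<Rightarrow> real" where
  "TTE \<beta> \<gamma> w E =
     (1 / real CARD('u)) * (\<Sum>a\<in>UNIV. (\<Sum>r\<in>UNIV. w a r * of_bool (E a r (\<lambda>_. True))) * \<beta> a + \<gamma> a)"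

end

theory Submission
  imports Defs
begin


lemma exp_pair_prod:
  fixes f :: "'a::finite \<Rightarrow> real" and g :: "'b::finite \<Rightarrow> real"
  shows "measure_pmf.expectation (pair_pmf P Q) (\<lambda>z. f (fst z) * g (snd z))
       = measure_pmf.expectation P f * measure_pmf.expectation Q g"
proof -
  have pp: "pmf (pair_pmf P Q) z = pmf P (fst z) * pmf Q (snd z)" for z
    by (cases z) (simp add: pmf_pair)
  have "measure_pmf.expectation (pair_pmf P Q) (\<lambda>z. f (fst z) * g (snd z))
      = (\<Sum>z\<in>UNIV. f (fst z) * g (snd z) * pmf (pair_pmf P Q) z)"
    by (rule integral_measure_pmf_real) auto
  also have "\<dots> = (\<Sum>x\<in>UNIV. \<Sum>y\<in>UNIV. (f x * pmf P x) * (g y * pmf Q y))"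
    by (simp add: UNIV_Times_UNIV[symmetric] sum.cartesian_product del: UNIV_Times_UNIV)
       (simp add: case_prod_unfold pp mult_ac)
  also have "\<dots> = (\<Sum>x\<in>UNIV. f x * pmf P x) * (\<Sum>y\<in>UNIV. g y * pmf Q y)"
    by (simp add: sum_product)
  also have "\<dots> = measure_pmf.expectation P f * measure_pmf.expectation Q g"
    by (subst (1 2) integral_measure_pmf_real[where A=UNIV]) auto
  finally show ?thesis .
qed

definition dep :: "'u set \<Rightarrow> (('u \<Rightarrow> bool) \<Rightarrow> real) \<Rightarrow> bool" where
  "dep A f \<longleftrightarrow> (\<forall>t t'. (\<forall>i\<in>A. t i = t' i) \<longrightarrow> f t = f t')"

lemma indep_mult:
  fixes A :: "'u::finite set" and f g :: "('u \<Rightarrow> bool) \<Rightarrow> real"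
  assumes f: "dep A f" and g: "dep (-A) g"
  shows "Ex_T p (\<lambda>t. f t * g t) = Ex_T p f * Ex_T p g"
proof -
  let ?B = "\<lambda>_::'u. bernoulli_pmf p"
  define h where "h = (\<lambda>(x,y) i. if i \<in> A then (x::'u\<Rightarrow>bool) i else y i)"
  define Q where "Q = pair_pmf (Pi_pmf A False ?B) (Pi_pmf (-A) False ?B)"
  have TQ: "treat_pmf p = map_pmf h Q"
    unfolding treat_pmf_def h_def Q_def using Pi_pmf_union[of A "-A" False ?B] by simp
  have hf: "f (h z) = f (fst z)" for z
    using f unfolding dep_def by (cases z) (auto simp: h_def)
  have hg: "g (h z) = g (snd z)" for z
    using g unfolding dep_def by (cases z) (auto simp: h_def)
  have "Ex_T p (\<lambda>t. f t * g t) = measure_pmf.expectation Q (\<lambda>z. f (fst z) * g (snd z))"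
    unfolding Ex_T_def TQ by (simp add: hf hg)
  also have "\<dots> = measure_pmf.expectation (Pi_pmf A False ?B) f * measure_pmf.expectation (Pi_pmf (-A) False ?B) g"
    unfolding Q_def by (rule exp_pair_prod)
  also have "measure_pmf.expectation (Pi_pmf A False ?B) f = Ex_T p f"
    unfolding Ex_T_def TQ Q_def by (simp add: hf[unfolded Q_def])
  also have "measure_pmf.expectation (Pi_pmf (-A) False ?B) g = Ex_T p g"
    unfolding Ex_T_def TQ Q_def by (simp add: hg[unfolded Q_def])
  finally show ?thesis .
qed

lemma integ: "integrable (measure_pmf (treat_pmf p)) (f :: ('u::finite \<Rightarrow> bool) \<Rightarrow> real)"
  by (rule integrable_measure_pmf_finite) simp

lemma Ex_add: "Ex_T p (\<lambda>t. f t + g t) = Ex_T p f + Ex_T p g"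
  unfolding Ex_T_def by (rule Bochner_Integration.integral_add) (rule integ)+
lemma Ex_diff: "Ex_T p (\<lambda>t. f t - g t) = Ex_T p f - Ex_T p g"
  unfolding Ex_T_def by (rule Bochner_Integration.integral_diff) (rule integ)+
lemma Ex_cmult: "Ex_T p (\<lambda>t. c * f t) = c * Ex_T p f"
  unfolding Ex_T_def by simp
lemma Ex_multc: "Ex_T p (\<lambda>t. f t * c) = Ex_T p f * c"
  unfolding Ex_T_def by simp
lemma Ex_divide: "Ex_T p (\<lambda>t. f t / c) = Ex_T p f / c"
  unfolding Ex_T_def by simp
lemma Ex_const: "Ex_T p (\<lambda>t. c) = c"
  unfolding Ex_T_def by simp
lemma Ex_sum: "Ex_T p (\<lambda>t. \<Sum>r\<in>S. f r t) = (\<Sum>r\<in>S. Ex_T p (f r))"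
  unfolding Ex_T_def by (rule Bochner_Integration.integral_sum) (rule integ)
lemma Ex_ind: "0 \<le> p \<Longrightarrow> p \<le> 1 \<Longrightarrow> Ex_T p (\<lambda>t::'u::finite\<Rightarrow>bool. of_bool (t r)) = p"
proof -
  assume "0 \<le> p" "p \<le> 1"
  have "Ex_T p (\<lambda>t::'u\<Rightarrow>bool. of_bool (t r)) = measure_pmf.expectation (map_pmf (\<lambda>t. t r) (treat_pmf p :: ('u \<Rightarrow> bool) pmf)) of_bool"
    unfolding Ex_T_def by simp
  also have "\<dots> = measure_pmf.expectation (bernoulli_pmf p) of_bool"
    unfolding treat_pmf_def by (subst Pi_pmf_component) auto
  finally show ?thesis using \<open>0 \<le> p\<close> \<open>p \<le> 1\<close> by simp
qed



lemma dep_mono: "dep A f \<Longrightarrow> A \<subseteq> B \<Longrightarrow> dep B f"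
  unfolding dep_def by blast
lemma dep_add: "dep A f \<Longrightarrow> dep A g \<Longrightarrow> dep A (\<lambda>t. f t + g t)"
proof -
  assume f: "dep A f" and g: "dep A g"
  show ?thesis unfolding dep_def
  proof (intro allI impI)
    fix t t' :: "'a \<Rightarrow> bool" assume h: "\<forall>i\<in>A. t i = t' i"
    have "f t = f t'" using f h unfolding dep_def by blast
    moreover have "g t = g t'" using g h unfolding dep_def by blast
    ultimately show "f t + g t = f t' + g t'" by simp
  qed
qed
lemma dep_mult: "dep A f \<Longrightarrow> dep A g \<Longrightarrow> dep A (\<lambda>t. f t * g t)"
proof -
  assume f: "dep A f" and g: "dep A g"
  show ?thesis unfolding dep_def
  proof (intro allI impI)
    fix t t' :: "'a \<Rightarrow> bool" assume h: "\<forall>i\<in>A. t i = t' i"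
    have "f t = f t'" using f h unfolding dep_def by blast
    moreover have "g t = g t'" using g h unfolding dep_def by blast
    ultimately show "f t * g t = f t' * g t'" by simp
  qed
qed
lemma dep_const: "dep A (\<lambda>t. c)"
  unfolding dep_def by simp
lemma dep_ind: "i \<in> A \<Longrightarrow> dep A (\<lambda>t. of_bool (t i))"
  unfolding dep_def by auto

lemma rdrv: "r_driven E \<Longrightarrow> t r = t' r \<Longrightarrow> E a r t = E a r t'"
  unfolding r_driven_def apply (drule spec[of _ a], drule spec[of _ r], drule spec[of _ t], drule spec[of _ t'])
  by (erule mp)

lemma rdrv1: "r_driven E \<Longrightarrow> of_bool (t r) * of_bool (E a r t) = (of_bool (t r) * of_bool (E a r (\<lambda>_. True)) :: real)"
  by (cases "t r") (auto dest: rdrv[where t=t and t'="\<lambda>_. True"])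

lemma alg1: "p \<noteq> 0 \<Longrightarrow> (q::real) \<noteq> 0 \<Longrightarrow> (R+g)/p = (1/p + 1/q)*R + g/p - R/q"
  by (simp add: field_simps)
lemma alg2:
  assumes p0: "p \<noteq> 0" and q0: "(q::real) \<noteq> 0" and pq: "p = 1 - q"
  shows "(1/p + 1/q)*(p*R) + g/p*p - R/q = g"
proof -
  have 1: "(1/p + 1/q)*(p*R) = R + p*R/q" using p0 by (simp add: field_simps)
  have 2: "p*R/q - R/q = -R"
  proof -
    have e: "p*R - R = -(q*R)" unfolding pq by (simp add: algebra_simps)
    have "p*R/q - R/q = (p*R - R)/q" by (simp add: diff_divide_distrib)
    also have "\<dots> = -R" using q0 by (simp add: e)
    finally show ?thesis .
  qed
  have 3: "g/p*p = g" using p0 by simp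
  show ?thesis using 1 2 3 by (simp add: algebra_simps)
qed

lemma gamma_part:
  fixes \<alpha> \<beta> \<gamma> :: "'u::finite \<Rightarrow> real"
  assumes rd: "r_driven E" and p: "0 < p" "p < 1" and wd: "w a a = 0"
  shows "Ex_T p (gamma_hat p \<alpha> \<beta> \<gamma> w E a) = \<gamma> a"
proof -
  define R where "R t = \<alpha> a + \<beta> a * exposure w E a t" for t
  have dR: "dep (-{a}) R"
    unfolding dep_def R_def exposure_def
  proof (intro allI impI)
    fix t t' :: "'u \<Rightarrow> bool" assume h: "\<forall>i\<in>-{a}. t i = t' i"
    have "(\<Sum>r\<in>UNIV. of_bool (t r) * of_bool (E a r t) * w a r) = (\<Sum>r\<in>UNIV. of_bool (t' r) * of_bool (E a r t') * w a r)"
    proof (rule sum.cong[OF refl])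
      fix r show "of_bool (t r) * of_bool (E a r t) * w a r = of_bool (t' r) * of_bool (E a r t') * w a r"
        proof (cases "r = a")
          case True then show ?thesis using wd by simp
        next
          case False then have "t r = t' r" using h by simp
          then show ?thesis using rdrv[OF rd, of t r t' a] by simp
        qed
    qed
    then show "\<alpha> a + \<beta> a * (\<Sum>r\<in>UNIV. of_bool (t r) * of_bool (E a r t) * w a r) =
               \<alpha> a + \<beta> a * (\<Sum>r\<in>UNIV. of_bool (t' r) * of_bool (E a r t') * w a r)" by simp
  qed
  have pt: "gamma_hat p \<alpha> \<beta> \<gamma> w E a t =
     (1/p + 1/(1-p)) * (of_bool (t a) * R t) + (\<gamma> a / p) * of_bool (t a) - R t / (1-p)" for t
  proof -
    have o: "outcome \<alpha> \<beta> \<gamma> w E a t = R t + \<gamma> a * of_bool (t a)" by (simp add: outcome_def R_def)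
    show ?thesis unfolding gamma_hat_def o using p
      by (cases "t a") (simp_all add: alg1[where q="1-p"])
  qed
  have ER: "Ex_T p (\<lambda>t. of_bool (t a) * R t) = p * Ex_T p R"
    using indep_mult[OF dep_ind[of a "{a}"] dR, of p] Ex_ind[of p a] p by simp
  have "Ex_T p (gamma_hat p \<alpha> \<beta> \<gamma> w E a) = Ex_T p (\<lambda>t. (1/p + 1/(1-p)) * (of_bool (t a) * R t) + (\<gamma> a / p) * of_bool (t a) - R t / (1-p))"
    by (rule arg_cong[where f="Ex_T p"]) (rule ext, rule pt)
  also have "\<dots> =
     (1/p + 1/(1-p)) * Ex_T p (\<lambda>t. of_bool (t a) * R t) + (\<gamma> a / p) * Ex_T p (\<lambda>t. of_bool (t a)) - Ex_T p R / (1-p)"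
    by (simp only: Ex_add Ex_diff Ex_cmult Ex_divide)
  also have "\<dots> = \<gamma> a"
  proof -
    have e: "Ex_T p (\<lambda>t. of_bool (t a)) = p" using p by (simp add: Ex_ind)
    show ?thesis unfolding ER e by (rule alg2[where q="1-p"]) (use p in auto)
  qed
  finally show ?thesis .
qed

lemma alg3: "(K::real) \<noteq> 0 \<Longrightarrow> (al + b*(xg+xn) + g*ta) * z / K * w = (b/K)*(xg*z*w) + (1/K)*(z*((al + b*xn + g*ta)*w))"
  by (simp add: field_simps)

lemma beta_part:
  fixes \<alpha> \<beta> \<gamma> :: "'u::finite \<Rightarrow> real"
  assumes anchor: "anchor_subgraph E G" and rd: "r_driven E" and p: "0 < p" "p < 1"
    and c_supp: "\<And>a r. u a r \<noteq> 0 \<Longrightarrow> (a, r) \<in> G"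
    and d_c: "\<And>a r. c a r = of_bool ((a, r) \<in> G)"
    and e_w: "\<And>a r. (a, r) \<in> G \<Longrightarrow> w a r \<noteq> 0"
    and cov: "\<And>a. Cov_T p (exposure w E a) (zu u a) \<noteq> 0"
    and wd: "\<And>a. w a a = 0"
  shows "Ex_T p (\<lambda>t. beta_hat p \<alpha> \<beta> \<gamma> w E u a t * W_hat p w E c a t)
         = \<beta> a * (\<Sum>r\<in>UNIV. w a r * of_bool (E a r (\<lambda>_. True)))"
proof -
  define Ga where "Ga = {r. (a, r) \<in> G}"
  have aG: "a \<notin> Ga" using e_w wd by (auto simp: Ga_def)
  have anc: "E a r t" if "r \<in> Ga" for r t using anchor that by (auto simp: Ga_def anchor_subgraph_def)
  have cG: "c a r = 1" if "r \<in> Ga" for r using that by (simp add: d_c Ga_def)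
  have cN: "c a r = 0" if "r \<notin> Ga" for r using that by (simp add: d_c Ga_def)
  have uN: "u a r = 0" if "r \<notin> Ga" for r using that c_supp by (auto simp: Ga_def)
  define K where "K = Cov_T p (exposure w E a) (zu u a)"
  have K0: "K \<noteq> 0" unfolding K_def by (rule cov)
  define Zc where "Zc t = zu u a t - Ex_T p (zu u a)" for t
  define XG where "XG t = (\<Sum>r\<in>UNIV. of_bool (r \<in> Ga) * (of_bool (t r) * of_bool (E a r t) * w a r))" for t
  define XN where "XN t = (\<Sum>r\<in>UNIV. of_bool (r \<notin> Ga) * (of_bool (t r) * of_bool (E a r t) * w a r))" for t
  define W where "W t = W_hat p w E c a t" for t
  have Xs: "exposure w E a t = XG t + XN t" for t
    unfolding exposure_def XG_def XN_def sum.distrib[symmetric]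
    by (rule sum.cong) (auto simp: of_bool_def)
  have dZ: "dep Ga Zc" unfolding dep_def
  proof (intro allI impI)
    fix t t' :: "'u \<Rightarrow> bool" assume h: "\<forall>i\<in>Ga. t i = t' i"
    have "zu u a t = zu u a t'" unfolding zu_def
    proof (rule sum.cong[OF refl])
      fix r show "of_bool (t r) * u a r = of_bool (t' r) * u a r"
        using h uN[of r] by (cases "r \<in> Ga") auto
    qed
    then show "Zc t = Zc t'" by (simp add: Zc_def)
  qed
  have dXG: "dep Ga XG" unfolding dep_def
  proof (intro allI impI)
    fix t t' :: "'u \<Rightarrow> bool" assume h: "\<forall>i\<in>Ga. t i = t' i"
    show "XG t = XG t'" unfolding XG_def
    proof (rule sum.cong[OF refl])
      fix r show "of_bool (r \<in> Ga) * (of_bool (t r) * of_bool (E a r t) * w a r) =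
                  of_bool (r \<in> Ga) * (of_bool (t' r) * of_bool (E a r t') * w a r)"
      proof (cases "r \<in> Ga")
        case True then have "t r = t' r" using h by simp
        then show ?thesis using rdrv[OF rd, of t r t' a] by simp
      qed simp
    qed
  qed
  have dXN: "dep (-Ga) XN" unfolding dep_def
  proof (intro allI impI)
    fix t t' :: "'u \<Rightarrow> bool" assume h: "\<forall>i\<in>-Ga. t i = t' i"
    show "XN t = XN t'" unfolding XN_def
    proof (rule sum.cong[OF refl])
      fix r show "of_bool (r \<notin> Ga) * (of_bool (t r) * of_bool (E a r t) * w a r) =
                  of_bool (r \<notin> Ga) * (of_bool (t' r) * of_bool (E a r t') * w a r)"
      proof (cases "r \<in> Ga")
        case False then have "t r = t' r" using h by simp
        then show ?thesis using rdrv[OF rd, of t r t' a] by simp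
      qed simp
    qed
  qed
  have dW: "dep (-Ga) W" unfolding dep_def
  proof (intro allI impI)
    fix t t' :: "'u \<Rightarrow> bool" assume h: "\<forall>i\<in>-Ga. t i = t' i"
    show "W t = W t'" unfolding W_def W_hat_def
    proof (rule sum.cong[OF refl])
      fix r show "of_bool (t r) * w a r * (of_bool (E a r t) - c a r) / p + w a r * c a r =
                  of_bool (t' r) * w a r * (of_bool (E a r t') - c a r) / p + w a r * c a r"
      proof (cases "r \<in> Ga")
        case False then have "t r = t' r" using h by simp
        then show ?thesis using rdrv[OF rd, of t r t' a] by simp
      next
        case True then show ?thesis using anc[OF True, of t] anc[OF True, of t'] cG[OF True] by simp
      qed
    qed
  qed
  have dTa: "dep (-Ga) (\<lambda>t. of_bool (t a))" using aG by (intro dep_ind) simp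
  have EZ: "Ex_T p Zc = 0" unfolding Zc_def by (simp add: Ex_diff Ex_const)
  have EW: "Ex_T p W = (\<Sum>r\<in>UNIV. w a r * of_bool (E a r (\<lambda>_. True)))"
    unfolding W_def W_hat_def Ex_sum
  proof (rule sum.cong[OF refl])
    fix r
    have "(\<lambda>t. of_bool (t r) * w a r * (of_bool (E a r t) - c a r) / p + w a r * c a r)
        = (\<lambda>t. of_bool (t r) * (w a r * (of_bool (E a r (\<lambda>_. True)) - c a r) / p) + w a r * c a r)"
    proof (rule ext)
      fix t :: "'u \<Rightarrow> bool"
      show "of_bool (t r) * w a r * (of_bool (E a r t) - c a r) / p + w a r * c a r
          = of_bool (t r) * (w a r * (of_bool (E a r (\<lambda>_. True)) - c a r) / p) + w a r * c a r"
        using rdrv[OF rd, of t r "\<lambda>_. True" a] by (cases "t r") auto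
    qed
    then have "Ex_T p (\<lambda>t. of_bool (t r) * w a r * (of_bool (E a r t) - c a r) / p + w a r * c a r)
        = Ex_T p (\<lambda>t. of_bool (t r) * (w a r * (of_bool (E a r (\<lambda>_. True)) - c a r) / p) + w a r * c a r)"
      by (rule arg_cong)
    also have "\<dots> = Ex_T p (\<lambda>t. of_bool (t r)) * (w a r * (of_bool (E a r (\<lambda>_. True)) - c a r) / p) + w a r * c a r"
      by (simp only: Ex_add Ex_multc Ex_const)
    also have "Ex_T p (\<lambda>t. of_bool (t r)) = p" using p by (simp add: Ex_ind)
    also have "p * (w a r * (of_bool (E a r (\<lambda>_. True)) - c a r) / p) + w a r * c a r = w a r * of_bool (E a r (\<lambda>_. True))"
      using p by (cases "E a r (\<lambda>_. True)") (simp_all add: field_simps)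
    finally show "Ex_T p (\<lambda>t. of_bool (t r) * w a r * (of_bool (E a r t) - c a r) / p + w a r * c a r)
             = w a r * of_bool (E a r (\<lambda>_. True))" .
  qed
  have Kx: "K = Ex_T p (\<lambda>t. XG t * Zc t)"
  proof -
    have "K = Ex_T p (\<lambda>t. XG t * Zc t + Zc t * XN t - Ex_T p (exposure w E a) * Zc t)"
      unfolding K_def Cov_T_def
      by (rule arg_cong[where f="Ex_T p"], rule ext) (simp add: Xs Zc_def algebra_simps)
    also have "\<dots> = Ex_T p (\<lambda>t. XG t * Zc t) + Ex_T p (\<lambda>t. Zc t * XN t) - Ex_T p (exposure w E a) * Ex_T p Zc"
      by (simp only: Ex_add Ex_diff Ex_cmult)
    also have "Ex_T p (\<lambda>t. Zc t * XN t) = 0"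
      using indep_mult[OF dZ dXN, of p] EZ by simp
    finally show ?thesis using EZ by simp
  qed
  have pt: "beta_hat p \<alpha> \<beta> \<gamma> w E u a t * W t =
      (\<beta> a / K) * (XG t * Zc t * W t) + (1/K) * (Zc t * ((\<alpha> a + \<beta> a * XN t + \<gamma> a * of_bool (t a)) * W t))" for t
    unfolding beta_hat_def outcome_def Xs K_def[symmetric] Zc_def[symmetric]
    by (rule alg3[OF K0])
  have "Ex_T p (\<lambda>t. beta_hat p \<alpha> \<beta> \<gamma> w E u a t * W_hat p w E c a t)
      = Ex_T p (\<lambda>t. (\<beta> a / K) * (XG t * Zc t * W t) + (1/K) * (Zc t * ((\<alpha> a + \<beta> a * XN t + \<gamma> a * of_bool (t a)) * W t)))"
    by (rule arg_cong[where f="Ex_T p"], rule ext) (simp only: pt[unfolded W_def] W_def)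
  also have "\<dots> = (\<beta> a / K) * Ex_T p (\<lambda>t. XG t * Zc t * W t) + (1/K) * Ex_T p (\<lambda>t. Zc t * ((\<alpha> a + \<beta> a * XN t + \<gamma> a * of_bool (t a)) * W t))"
    by (simp only: Ex_add Ex_cmult)
  also have "Ex_T p (\<lambda>t. XG t * Zc t * W t) = K * Ex_T p W"
    using indep_mult[OF dep_mult[OF dXG dZ] dW, of p] Kx by simp
  also have "Ex_T p (\<lambda>t. Zc t * ((\<alpha> a + \<beta> a * XN t + \<gamma> a * of_bool (t a)) * W t)) = 0"
  proof -
    have "dep (-Ga) (\<lambda>t. (\<alpha> a + \<beta> a * XN t + \<gamma> a * of_bool (t a)) * W t)"
      by (intro dep_mult dep_add dep_const dXN dTa dW)
    from indep_mult[OF dZ this, of p] show ?thesis using EZ by simp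
  qed
  finally show ?thesis using K0 EW by simp
qed

theorem corollary1:
  fixes p :: real
    and \<alpha> \<beta> \<gamma> :: "'u::finite \<Rightarrow> real"
    and w u c :: "'u \<Rightarrow> 'u \<Rightarrow> real"
    and E :: "'u \<Rightarrow> 'u \<Rightarrow> ('u \<Rightarrow> bool) \<Rightarrow> bool"
    and G :: "('u \<times> 'u) set"
  assumes anchor: "anchor_subgraph E G"
    and a_rdriven: "r_driven E"
    and b_p: "0 < p" "p < 1"
    and c_supp: "\<And>a r. u a r \<noteq> 0 \<Longrightarrow> (a, r) \<in> G"
    and d_c: "\<And>a r. c a r = of_bool ((a, r) \<in> G)"
    and e_w: "\<And>a r. (a, r) \<in> G \<Longrightarrow> w a r \<noteq> 0"
    and f_u: "\<And>a. card {r. u a r \<noteq> 0} > 0"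
    and cov_nz: "\<And>a. Cov_T p (exposure w E a) (zu u a) \<noteq> 0"
    and w_diag: "\<And>a. w a a = 0"
    and u_diag: "\<And>a. u a a = 0"
  shows "Ex_T p (mu_hat_uni p \<alpha> \<beta> \<gamma> w E u c) = TTE \<beta> \<gamma> w E"
proof -
  have bp: "Ex_T p (\<lambda>t. beta_hat p \<alpha> \<beta> \<gamma> w E u a t * W_hat p w E c a t)
         = \<beta> a * (\<Sum>r\<in>UNIV. w a r * of_bool (E a r (\<lambda>_. True)))" for a
    by (rule beta_part[OF anchor a_rdriven b_p c_supp d_c e_w cov_nz w_diag])
  have gp: "Ex_T p (gamma_hat p \<alpha> \<beta> \<gamma> w E a) = \<gamma> a" for a
    by (rule gamma_part[OF a_rdriven b_p w_diag])
  have "mu_hat_uni p \<alpha> \<beta> \<gamma> w E u c = (\<lambda>t. (1 / real CARD('u)) * (\<Sum>a\<in>UNIV. beta_hat p \<alpha> \<beta> \<gamma> w E u a t * W_hat p w E c a t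
                                      + gamma_hat p \<alpha> \<beta> \<gamma> w E a t))"
    by (rule ext) (simp only: mu_hat_uni_def)
  then have "Ex_T p (mu_hat_uni p \<alpha> \<beta> \<gamma> w E u c) = (1 / real CARD('u)) * (\<Sum>a\<in>UNIV.
       Ex_T p (\<lambda>t. beta_hat p \<alpha> \<beta> \<gamma> w E u a t * W_hat p w E c a t) + Ex_T p (gamma_hat p \<alpha> \<beta> \<gamma> w E a))"
    by (simp only: Ex_cmult Ex_sum Ex_add)
  also have "\<dots> = TTE \<beta> \<gamma> w E"
    unfolding TTE_def bp gp by (simp add: mult.commute)
  finally show ?thesis .
qed


end
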